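(* Let $\mathcal M$ be a finite polyptych lattice over $F$ and let $\mathcal C$ be a maximal-dimensional cone of $\Sigma(\mathcal M)$. If $p,q\in\mathrm{Sp}(\mathcal M)$ satisfy $p(m)=q(m)$ for all $m\in\mathcal C\cap\mathcal M$, then $p=q$. Likewise, if $p,q\in\mathrm{Sp}_{\mathbb R}(\mathcal M)$ agree on $\mathcal C$, then $p=q$.
   Context: Fix a subring $F$ with $\mathbb Z\subseteq F\subseteq\mathbb R$. A map $\psi:M\to M'$ between finite-rank free $F$-modules is piecewise $F$-linear if it is continuous and there is a complete fan of $F$-rational polyhedral cones in $M\otimes_F\mathbb R$ with $\psi$ $F$-linear on each cone. A polyptych lattice of rank $r$ over $F$ is a collection $\{M_\alpha\}_{\alpha\in I}$ of free $F$-modules of rank $r$ with piecewise $F$-linear maps $\mu_{\alpha,\beta}:M_\alpha\to M_\beta$ for all $\alpha,\beta$ with $\mu_{\alpha,\alpha}=\mathrm{id}$, $\mu_{\alpha,\beta}=\mu_{\beta,\alpha}^{-1}$, $\mu_{\beta,\gamma}\circ\mu_{\alpha,\beta}=\mu_{\alpha,\gamma}$; finite if $I$ is finite. Its elements are classes of $\bigsqcup M_\alpha$ under $m_\alpha\sim\mu_{\alpha,\beta}(m_\alpha)$; $\pi_\alpha$ is the chart map to $M_\alpha$; $\mathcal M_{\mathbb R}$ is obtained by tensoring charts with $\mathbb R$. $m+_\alpha m':=\pi_\alpha^{-1}(\pi_\alpha(m)+\pi_\alpha(m'))$, $\lambda m:=\pi_\alpha^{-1}(\lambda\pi_\alpha(m))$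 for $\lambda\ge0$. $\Sigma(\mathcal M)$ is the coarsest complete fan of cones in $\mathcal M_{\mathbb R}$ (sets whose chart images are $F$-rational polyhedral cones) on whose chart images all mutations are linear. A point is $p:\mathcal M\to F$ with $p(m)+p(m')=\min_{\alpha}p(m+_\alpha m')$ and $p(\lambda m)=\lambda p(m)$ ($\lambda\in F_{\ge0}$); $\mathrm{Sp}(\mathcal M)$ is the set of points and $\mathrm{Sp}_{\mathbb R}(\mathcal M)$ the set of points of $\mathcal M_{\mathbb R}$. *)

theory Defs
  imports "HOL-Analysis.Analysis"
begin

text \<open>A free F-module of rank r is modelled as the set of vectors in
  real^'n (r = CARD('n)) with all coordinates in F; its tensor product with the reals is
  all of real^'n. A mutation is given by its (unique, continuous, piecewise linear)
  extension to real^'n.\<close>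

definition subring_Z :: "real set \<Rightarrow> bool" where
  "subring_Z F \<longleftrightarrow> \<int> \<subseteq> F \<and> (\<forall>x\<in>F. \<forall>y\<in>F. x + y \<in> F \<and> x * y \<in> F \<and> - x \<in> F)"

definition Fpts :: "real set \<Rightarrow> (real^'n) set" where
  "Fpts S = {v. \<forall>i. v $ i \<in> S}"

definition gen_cone :: "(real^'n) set \<Rightarrow> (real^'n) set" where
  "gen_cone V = {x. \<exists>c. (\<forall>v\<in>V. c v \<ge> 0) \<and> x = (\<Sum>v\<in>V. c v *\<^sub>R v)}"

definition F_cone :: "real set \<Rightarrow> (real^'n) set \<Rightarrow> bool" where
  "F_cone F \<sigma> \<longleftrightarrow> (\<exists>V. finite V \<and> V \<subseteq> Fpts F \<and> \<sigma> = gen_cone V)"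

definition F_fan :: "real set \<Rightarrow> (real^'n) set set \<Rightarrow> bool" where
  "F_fan F \<Sigma> \<longleftrightarrow> finite \<Sigma> \<and> (\<forall>\<sigma>\<in>\<Sigma>. F_cone F \<sigma>)
     \<and> (\<forall>\<sigma>\<in>\<Sigma>. \<forall>\<tau>. \<tau> face_of \<sigma> \<and> \<tau> \<noteq> {} \<longrightarrow> \<tau> \<in> \<Sigma>)
     \<and> (\<forall>\<sigma>\<in>\<Sigma>. \<forall>\<tau>\<in>\<Sigma>. (\<sigma> \<inter> \<tau>) face_of \<sigma> \<and> (\<sigma> \<inter> \<tau>) face_of \<tau>)"

definition complete_F_fan :: "real set \<Rightarrow> (real^'n) set set \<Rightarrow> bool" where
  "complete_F_fan F \<Sigma> \<longleftrightarrow> F_fan F \<Sigma> \<and> \<Union>\<Sigma> = UNIV"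

definition pw_F_linear :: "real set \<Rightarrow> (real^'n \<Rightarrow> real^'n) \<Rightarrow> bool" where
  "pw_F_linear F f \<longleftrightarrow> continuous_on UNIV f \<and>
     (\<exists>\<Sigma>. complete_F_fan F \<Sigma> \<and>
        (\<forall>\<sigma>\<in>\<Sigma>. \<exists>A::real^'n^'n. (\<forall>i j. A $ i $ j \<in> F) \<and> (\<forall>x\<in>\<sigma>. f x = A *v x)))"

definition polyptych_lattice ::
  "real set \<Rightarrow> 'i set \<Rightarrow> ('i \<Rightarrow> 'i \<Rightarrow> real^'n \<Rightarrow> real^'n) \<Rightarrow> bool" where
  "polyptych_lattice F I \<mu> \<longleftrightarrow> subring_Z F \<and>
     (\<forall>a\<in>I. \<forall>b\<in>I. \<mu> a b ` Fpts F \<subseteq> Fpts F \<and> pw_F_linear F (\<mu> a b)) \<and>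
     (\<forall>a\<in>I. \<forall>v. \<mu> a a v = v) \<and>
     (\<forall>a\<in>I. \<forall>b\<in>I. \<forall>v. \<mu> b a (\<mu> a b v) = v) \<and>
     (\<forall>a\<in>I. \<forall>b\<in>I. \<forall>c\<in>I. \<forall>v. \<mu> b c (\<mu> a b v) = \<mu> a c v)"

text \<open>Elements: the equivalence class of (a, v) is the set of all its chart representatives.
  With S = F this gives the polyptych lattice M, with S = UNIV it gives M_R; M is then
  literally a subset of M_R.\<close>
definition pl_class :: "'i set \<Rightarrow> ('i \<Rightarrow> 'i \<Rightarrow> real^'n \<Rightarrow> real^'n) \<Rightarrow> 'i \<Rightarrow> real^'n
    \<Rightarrow> ('i \<times> (real^'n)) set" where
  "pl_class I \<mu> a v = {(b, \<mu> a b v) | b. b \<in> I}"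

definition pl_elems :: "real set \<Rightarrow> 'i set \<Rightarrow> ('i \<Rightarrow> 'i \<Rightarrow> real^'n \<Rightarrow> real^'n)
    \<Rightarrow> ('i \<times> (real^'n)) set set" where
  "pl_elems S I \<mu> = {pl_class I \<mu> a v | a v. a \<in> I \<and> v \<in> Fpts S}"

definition pl_chart :: "'i \<Rightarrow> ('i \<times> (real^'n)) set \<Rightarrow> real^'n" where
  "pl_chart a m = (THE v. (a, v) \<in> m)"

definition pl_add :: "'i set \<Rightarrow> ('i \<Rightarrow> 'i \<Rightarrow> real^'n \<Rightarrow> real^'n) \<Rightarrow> 'i
    \<Rightarrow> ('i \<times> (real^'n)) set \<Rightarrow> ('i \<times> (real^'n)) set \<Rightarrow> ('i \<times> (real^'n)) set" where
  "pl_add I \<mu> a m m' = pl_class I \<mu> a (pl_chart a m + pl_chart a m')"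

definition pl_smul :: "'i set \<Rightarrow> ('i \<Rightarrow> 'i \<Rightarrow> real^'n \<Rightarrow> real^'n) \<Rightarrow> 'i
    \<Rightarrow> real \<Rightarrow> ('i \<times> (real^'n)) set \<Rightarrow> ('i \<times> (real^'n)) set" where
  "pl_smul I \<mu> a c m = pl_class I \<mu> a (c *\<^sub>R pl_chart a m)"

text \<open>Points of the polyptych lattice with scalars S (S = F: Sp(M); S = UNIV: Sp_R(M)).\<close>
definition pl_point :: "real set \<Rightarrow> 'i set \<Rightarrow> ('i \<Rightarrow> 'i \<Rightarrow> real^'n \<Rightarrow> real^'n)
    \<Rightarrow> (('i \<times> (real^'n)) set \<Rightarrow> real) \<Rightarrow> bool" where
  "pl_point S I \<mu> p \<longleftrightarrow>
     (\<forall>m\<in>pl_elems S I \<mu>. p m \<in> S) \<and>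
     (\<forall>m\<in>pl_elems S I \<mu>. \<forall>m'\<in>pl_elems S I \<mu>.
        p m + p m' = Min ((\<lambda>a. p (pl_add I \<mu> a m m')) ` I)) \<and>
     (\<forall>c\<in>S. c \<ge> 0 \<longrightarrow> (\<forall>m\<in>pl_elems S I \<mu>. \<forall>a\<in>I. p (pl_smul I \<mu> a c m) = c * p m))"

definition pl_cone :: "real set \<Rightarrow> 'i set \<Rightarrow> ('i \<Rightarrow> 'i \<Rightarrow> real^'n \<Rightarrow> real^'n)
    \<Rightarrow> ('i \<times> (real^'n)) set set \<Rightarrow> bool" where
  "pl_cone F I \<mu> C \<longleftrightarrow> C \<subseteq> pl_elems UNIV I \<mu> \<and> (\<forall>a\<in>I. F_cone F (pl_chart a ` C))"

definition pl_linear_fan :: "real set \<Rightarrow> 'i set \<Rightarrow> ('i \<Rightarrow> 'i \<Rightarrow> real^'n \<Rightarrow> real^'n)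
    \<Rightarrow> ('i \<times> (real^'n)) set set set \<Rightarrow> bool" where
  "pl_linear_fan F I \<mu> \<Sigma> \<longleftrightarrow>
     (\<forall>C\<in>\<Sigma>. pl_cone F I \<mu> C) \<and>
     (\<forall>a\<in>I. complete_F_fan F ((\<lambda>C. pl_chart a ` C) ` \<Sigma>)) \<and>
     (\<forall>C\<in>\<Sigma>. \<forall>a\<in>I. \<forall>b\<in>I. \<exists>L. linear L \<and> (\<forall>v\<in>pl_chart a ` C. \<mu> a b v = L v))"

definition pl_Sigma :: "real set \<Rightarrow> 'i set \<Rightarrow> ('i \<Rightarrow> 'i \<Rightarrow> real^'n \<Rightarrow> real^'n)
    \<Rightarrow> ('i \<times> (real^'n)) set set set \<Rightarrow> bool" where
  "pl_Sigma F I \<mu> \<Sigma> \<longleftrightarrow> pl_linear_fan F I \<mu> \<Sigma> \<and>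
     (\<forall>\<Sigma>'. pl_linear_fan F I \<mu> \<Sigma>' \<longrightarrow> (\<forall>C'\<in>\<Sigma>'. \<exists>C\<in>\<Sigma>. C' \<subseteq> C))"

end

theory Submission
  imports Defs
begin


lemma cone_shift:
  fixes V :: "(real^'n) set"
  assumes fin: "finite V" and w: "w \<in> span V"
  shows "eventually (\<lambda>N. w + real N *\<^sub>R (\<Sum>V) \<in> gen_cone V) sequentially"
proof -
  obtain c where wc: "w = (\<Sum>v\<in>V. c v *\<^sub>R v)"
    using w span_finite[OF fin] by auto
  define N0 where "N0 = nat \<lceil>\<Sum>v\<in>V. \<bar>c v\<bar>\<rceil>"
  show ?thesis unfolding eventually_sequentially
  proof (intro exI allI impI)
    fix N assume N: "N \<ge> N0"
    have ge: "c v + real N \<ge> 0" if "v \<in> V" for v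
    proof -
      have "\<bar>c v\<bar> \<le> (\<Sum>v\<in>V. \<bar>c v\<bar>)"
        using member_le_sum[of v V "\<lambda>v. \<bar>c v\<bar>"] fin that by auto
      also have "\<dots> \<le> real N0" unfolding N0_def by linarith
      also have "\<dots> \<le> real N" using N by simp
      finally show ?thesis by linarith
    qed
    have eq: "w + real N *\<^sub>R (\<Sum>V) = (\<Sum>v\<in>V. (c v + real N) *\<^sub>R v)"
      by (simp add: wc scaleR_add_left sum.distrib scaleR_sum_right)
    show "w + real N *\<^sub>R (\<Sum>V) \<in> gen_cone V"
      unfolding gen_cone_def
    proof (intro CollectI exI[of _ "\<lambda>v. c v + real N"] conjI ballI)
      fix v assume "v \<in> V" then show "0 \<le> c v + real N" by (rule ge)
    next
      show "w + real N *\<^sub>R (\<Sum>V) = (\<Sum>v\<in>V. (c v + real N) *\<^sub>R v)" by (rule eq)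
    qed
  qed
qed

lemma span_full:
  fixes V :: "(real^'n) set"
  assumes "aff_dim (gen_cone V) = int CARD('n)"
  shows "span V = UNIV"
proof -
  have "gen_cone V \<subseteq> span V"
    unfolding gen_cone_def by (auto intro!: span_sum span_scale intro: span_base)
  then have "aff_dim (gen_cone V) \<le> aff_dim (span V)" by (rule aff_dim_subset)
  also have "\<dots> = int (dim V)" by (simp add: aff_dim_subspace)
  finally have "dim V \<ge> CARD('n)" using assms by simp
  moreover have "dim V \<le> CARD('n)" using dim_subset_UNIV[of V] by simp
  ultimately have "dim V = DIM(real^'n)" by simp
  then show ?thesis using dim_eq_full by blast
qed

lemma chart_class:
  assumes "b \<in> I"
  shows "pl_chart b (pl_class I \<mu> a v) = \<mu> a b v"
  unfolding pl_chart_def pl_class_def using assms by auto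

lemma class_mut:
  assumes "polyptych_lattice F I \<mu>" "a \<in> I" "b \<in> I"
  shows "pl_class I \<mu> b (\<mu> a b v) = pl_class I \<mu> a v"
  using assms unfolding polyptych_lattice_def pl_class_def by auto

lemma elem_class:
  assumes "polyptych_lattice F I \<mu>" "m \<in> pl_elems S I \<mu>" "b \<in> I"
  shows "m = pl_class I \<mu> b (pl_chart b m)"
proof -
  obtain a v where m: "m = pl_class I \<mu> a v" "a \<in> I" using assms(2) unfolding pl_elems_def by auto
  have "pl_chart b m = \<mu> a b v" using m(1) chart_class[OF assms(3), of \<mu> a v] by simp
  then show ?thesis using m class_mut[OF assms(1) m(2) assms(3)] by simp
qed

lemma elem_chart_S:
  assumes "polyptych_lattice F I \<mu>" "m \<in> pl_elems S I \<mu>" "b \<in> I"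
    and mS: "\<forall>a\<in>I. \<forall>b\<in>I. \<mu> a b ` Fpts S \<subseteq> Fpts S"
  shows "pl_chart b m \<in> Fpts S"
proof -
  obtain a v where m: "m = pl_class I \<mu> a v" "a \<in> I" "v \<in> Fpts S"
    using assms(2) unfolding pl_elems_def by auto
  have "pl_chart b m = \<mu> a b v" using m(1) chart_class[OF assms(3), of \<mu> a v] by simp
  then show ?thesis using m mS assms(3) by auto
qed

lemma Fpts_add: "subring_Z F \<Longrightarrow> x \<in> Fpts F \<Longrightarrow> y \<in> Fpts F \<Longrightarrow> x + y \<in> Fpts F"
  unfolding Fpts_def subring_Z_def by auto

lemma Fpts_zero: "subring_Z F \<Longrightarrow> 0 \<in> Fpts F"
  unfolding Fpts_def subring_Z_def by auto

lemma Fpts_sum: assumes sF: "subring_Z F" shows "finite V \<Longrightarrow> V \<subseteq> Fpts F \<Longrightarrow> (\<Sum>V) \<in> Fpts F"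
proof (induction V rule: finite_induct)
  case empty then show ?case by (simp add: Fpts_zero sF)
next
  case (insert x V) then show ?case by (simp add: Fpts_add sF)
qed

lemma Fpts_nat: "subring_Z F \<Longrightarrow> x \<in> Fpts F \<Longrightarrow> real N *\<^sub>R x \<in> Fpts F"
proof -
  assume sF: "subring_Z F" and x: "x \<in> Fpts F"
  have "real N \<in> F" using sF unfolding subring_Z_def
    by (metis Ints_of_nat subsetD)
  then show ?thesis using sF x unfolding Fpts_def subring_Z_def by auto
qed

lemma pl_point_add:
  assumes "pl_point S I \<mu> p" "m \<in> pl_elems S I \<mu>" "m' \<in> pl_elems S I \<mu>"
  shows "p m + p m' = Min ((\<lambda>a. p (pl_add I \<mu> a m m')) ` I)"
  using assms unfolding pl_point_def by blast

lemma main_gen: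
  fixes \<mu> :: "'i \<Rightarrow> 'i \<Rightarrow> real^'n \<Rightarrow> real^'n"
  assumes PL: "polyptych_lattice F I \<mu>" and fin: "finite I" and Sig: "pl_Sigma F I \<mu> \<Sigma>"
    and CS: "C \<in> \<Sigma>" and a: "a \<in> I" and ad: "aff_dim (pl_chart a ` C) = int CARD('n)"
    and FS: "Fpts F \<subseteq> (Fpts S :: (real^'n) set)"
    and addS: "\<forall>x\<in>(Fpts S :: (real^'n) set). \<forall>y\<in>Fpts S. x + y \<in> Fpts S"
    and mS: "\<forall>a\<in>I. \<forall>b\<in>I. \<mu> a b ` Fpts S \<subseteq> Fpts S"
    and p: "pl_point S I \<mu> p" and q: "pl_point S I \<mu> q"
    and agree: "\<forall>m\<in>C \<inter> pl_elems S I \<mu>. p m = q m"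
    and m: "m \<in> pl_elems S I \<mu>"
  shows "p m = q m"
proof -
  define K where "K = pl_chart a ` C"
  have sF: "subring_Z F" using PL unfolding polyptych_lattice_def by simp
  have inv: "\<And>b c v. b \<in> I \<Longrightarrow> c \<in> I \<Longrightarrow> \<mu> c b (\<mu> b c v) = v"
    using PL unfolding polyptych_lattice_def by blast
  have lf: "pl_linear_fan F I \<mu> \<Sigma>" using Sig unfolding pl_Sigma_def by simp
  have Ccone: "pl_cone F I \<mu> C" using lf CS unfolding pl_linear_fan_def by simp
  have Csub: "C \<subseteq> pl_elems UNIV I \<mu>" using Ccone unfolding pl_cone_def by simp
  obtain V where V: "finite V" "V \<subseteq> Fpts F" "K = gen_cone V"
    using Ccone a unfolding pl_cone_def F_cone_def K_def by blast
  have spanV: "span V = UNIV" using span_full ad V(3) K_def by metis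
  define u0 where "u0 = \<Sum>V"
  have u0F: "u0 \<in> Fpts F" unfolding u0_def using Fpts_sum[OF sF V(1,2)] .
  have inK: "pl_class I \<mu> a x \<in> C" if xK: "x \<in> K" for x
  proof -
    obtain y where y: "y \<in> C" "x = pl_chart a y" using xK unfolding K_def by blast
    have "y = pl_class I \<mu> a (pl_chart a y)"
      using elem_class[OF PL _ a] y(1) Csub by blast
    then show ?thesis using y by simp
  qed
  have LfEx: "\<forall>b\<in>I. \<exists>L. linear L \<and> (\<forall>v\<in>K. \<mu> a b v = L v)"
    using lf CS a unfolding pl_linear_fan_def K_def by blast
  obtain Lf where Lf: "\<And>b. b \<in> I \<Longrightarrow> linear (Lf b)"
      "\<And>b v. b \<in> I \<Longrightarrow> v \<in> K \<Longrightarrow> \<mu> a b v = Lf b v"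
    using bchoice[OF LfEx] by blast
  have ev: "eventually (\<lambda>N. w + real N *\<^sub>R u0 \<in> K) sequentially" for w
    using cone_shift[OF V(1), of w] spanV V(3) u0_def by simp
  have surjL: "surj (Lf b)" if b: "b \<in> I" for b
  proof -
    have "inj (Lf b)"
    proof (subst linear_injective_0[OF Lf(1)[OF b]], intro allI impI)
      fix x assume x0: "Lf b x = 0"
      have "eventually (\<lambda>N. x + real N *\<^sub>R u0 \<in> K \<and> 0 + real N *\<^sub>R u0 \<in> K) sequentially"
        using eventually_conj[OF ev ev] .
      then obtain N where N: "x + real N *\<^sub>R u0 \<in> K" "real N *\<^sub>R u0 \<in> K"
        unfolding eventually_sequentially by auto
      have "\<mu> a b (x + real N *\<^sub>R u0) = \<mu> a b (real N *\<^sub>R u0)"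
        using Lf(2)[OF b N(1)] Lf(2)[OF b N(2)] linear_add[OF Lf(1)[OF b]] x0 by simp
      then have "\<mu> b a (\<mu> a b (x + real N *\<^sub>R u0)) = \<mu> b a (\<mu> a b (real N *\<^sub>R u0))" by simp
      then show "x = 0" using inv[OF a b] by simp
    qed
    then show ?thesis using linear_injective_imp_surjective Lf(1)[OF b] by blast
  qed
  have wfEx: "\<forall>b\<in>I. \<exists>w. Lf b w = pl_chart b m"
  proof
    fix b assume b: "b \<in> I"
    obtain w where "pl_chart b m = Lf b w" using surjL[OF b] unfolding surj_def by blast
    then show "\<exists>w. Lf b w = pl_chart b m" by (intro exI[of _ w]) simp
  qed
  obtain wf where wf: "\<And>b. b \<in> I \<Longrightarrow> Lf b (wf b) = pl_chart b m"
    using bchoice[OF wfEx] by blast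
  have "eventually (\<lambda>N. \<forall>b\<in>I. wf b + real N *\<^sub>R u0 \<in> K) sequentially"
    by (intro eventually_ball_finite[OF fin] ballI ev)
  then obtain N0 where N0: "\<forall>n\<ge>N0. \<forall>b\<in>I. wf b + real n *\<^sub>R u0 \<in> K"
    unfolding eventually_sequentially by blast
  define N where "N = N0"
  have N: "\<And>b. b \<in> I \<Longrightarrow> wf b + real N *\<^sub>R u0 \<in> K"
    using N0 unfolding N_def by simp
  define uv where "uv = real N *\<^sub>R u0"
  have uvK: "uv \<in> K"
  proof -
    have "uv = (\<Sum>v\<in>V. real N *\<^sub>R v)" unfolding uv_def u0_def by (simp add: scaleR_sum_right)
    then show ?thesis unfolding V(3) gen_cone_def
      by (intro CollectI exI[of _ "\<lambda>_. real N"]) simp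
  qed
  have uvS: "uv \<in> Fpts S" using Fpts_nat[OF sF u0F, of N] FS unfolding uv_def by blast
  define u where "u = pl_class I \<mu> a uv"
  have uC: "u \<in> C" using inK[OF uvK] u_def by simp
  have uS: "u \<in> pl_elems S I \<mu>" unfolding u_def pl_elems_def using a uvS by blast
  have addC: "pl_add I \<mu> b m u \<in> C \<inter> pl_elems S I \<mu>" if b: "b \<in> I" for b
  proof -
    have cu: "pl_chart b u = Lf b uv" using chart_class[OF b, of \<mu> a uv] Lf(2)[OF b uvK] u_def by simp
    have "pl_chart b m + pl_chart b u = Lf b (wf b + uv)"
      using cu wf[OF b] linear_add[OF Lf(1)[OF b]] by simp
    also have "\<dots> = \<mu> a b (wf b + uv)" using Lf(2)[OF b N[OF b]] uv_def by simp
    finally have eq: "pl_add I \<mu> b m u = pl_class I \<mu> a (wf b + uv)"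
      unfolding pl_add_def using class_mut[OF PL a b] by simp
    have "pl_chart b m \<in> Fpts S" using elem_chart_S[OF PL m b mS] .
    moreover have "pl_chart b u \<in> Fpts S"
      using chart_class[OF b, of \<mu> a uv] u_def mS a b uvS by auto
    ultimately have "pl_add I \<mu> b m u \<in> pl_elems S I \<mu>"
      unfolding pl_add_def pl_elems_def using b addS
      by (intro CollectI exI[of _ b] exI[of _ "pl_chart b m + pl_chart b u"] conjI refl) auto
    then show ?thesis using eq inK N[OF b] uv_def by simp
  qed
  have "p m + p u = Min ((\<lambda>b. p (pl_add I \<mu> b m u)) ` I)"
    using pl_point_add[OF p m uS] .
  also have "\<dots> = Min ((\<lambda>b. q (pl_add I \<mu> b m u)) ` I)"
    using addC agree by (intro arg_cong[where f=Min] image_cong) auto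
  also have "\<dots> = q m + q u"
    using pl_point_add[OF q m uS] by simp
  finally show ?thesis using agree uC uS by simp
qed


theorem mainTheorem2:
  fixes F :: "real set" and I :: "'i set" and \<mu> :: "'i \<Rightarrow> 'i \<Rightarrow> real^'n \<Rightarrow> real^'n"
    and \<Sigma> :: "('i \<times> (real^'n)) set set set" and C :: "('i \<times> (real^'n)) set set"
  assumes "polyptych_lattice F I \<mu>"
    and "finite I"
    and "pl_Sigma F I \<mu> \<Sigma>"
    and "C \<in> \<Sigma>"
    and "\<exists>a\<in>I. aff_dim (pl_chart a ` C) = int CARD('n)"
  shows "(\<forall>p q. pl_point F I \<mu> p \<and> pl_point F I \<mu> q
            \<and> (\<forall>m\<in>C \<inter> pl_elems F I \<mu>. p m = q m)
            \<longrightarrow> (\<forall>m\<in>pl_elems F I \<mu>. p m = q m))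
       \<and> (\<forall>p q. pl_point UNIV I \<mu> p \<and> pl_point UNIV I \<mu> q
            \<and> (\<forall>m\<in>C. p m = q m)
            \<longrightarrow> (\<forall>m\<in>pl_elems UNIV I \<mu>. p m = q m))"
proof -
  obtain a where a: "a \<in> I" "aff_dim (pl_chart a ` C) = int CARD('n)" using assms(5) by blast
  have sF: "subring_Z F" using assms(1) unfolding polyptych_lattice_def by simp
  have mF: "\<forall>a\<in>I. \<forall>b\<in>I. \<mu> a b ` Fpts F \<subseteq> Fpts F"
    using assms(1) unfolding polyptych_lattice_def by blast
  have UF: "Fpts (UNIV::real set) = (UNIV :: (real^'n) set)" unfolding Fpts_def by simp
  have Csub: "C \<subseteq> pl_elems UNIV I \<mu>"
    using assms(3,4) unfolding pl_Sigma_def pl_linear_fan_def pl_cone_def by blast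
  show ?thesis
  proof (intro conjI allI impI ballI)
    fix p q m assume h: "pl_point F I \<mu> p \<and> pl_point F I \<mu> q \<and> (\<forall>m\<in>C \<inter> pl_elems F I \<mu>. p m = q m)"
      and m: "m \<in> pl_elems F I \<mu>"
    show "p m = q m"
      by (rule main_gen[OF assms(1-4) a order_refl _ mF _ _ _ m])
        (use h Fpts_add[OF sF] in auto)
  next
    fix p q m assume h: "pl_point UNIV I \<mu> p \<and> pl_point UNIV I \<mu> q \<and> (\<forall>m\<in>C. p m = q m)"
      and m: "m \<in> pl_elems UNIV I \<mu>"
    show "p m = q m"
      by (rule main_gen[OF assms(1-4) a _ _ _ _ _ _ m]) (use h UF Csub in auto)
  qed
qed

end
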